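(* Let $L=\{a^nb^m : n,m\in\mathbb{N},\ m\le n\}$ over the alphabet $\{a,b\}$. Then $L\in\mathrm{RN}_1$ and $L\notin\mathrm{RH}$, i.e. $L$ is recognised by some (nondeterministic) $1$-VASS under reachability acceptance but by no history-deterministic $k$-VASS (for any $k$) under reachability acceptance.
   Context: Fix a finite alphabet $\Sigma$. A $k$-dimensional vector addition system with states ($k$-VASS) is a tuple $(Q,q_0,F,\delta)$ where $Q$ is a finite set of states, $q_0\in Q$ is initial, $F\subseteq Q$ is the set of accepting states, and $\delta\subseteq Q\times\Sigma\times\mathbb{Z}^k\times Q$ is a finite set of transitions (no $\varepsilon$-transitions). A run on a word $w=a_1\cdots a_n$ is a sequence of transitions $(p_{i-1},a_i,d_i,p_i)$ with $p_0=q_0$ such that the counter vectors $v_0=\vec 0$, $v_i=v_{i-1}+d_i$ all lie in $\mathbb{N}^k$. Under reachability acceptance the run is accepting if $p_n\in F$ and $v_n=\vec 0$. The language is the set of words having an accepting run. A VASS is history-deterministic if there is a resolver, i.e. a function $r$ mapping each finite sequence of transitions and each letter $a$ to a transition labelled $a$, such that for every word $w$ in the language, the sequence of transitions obtained by successively applying $r$ to the letters of $w$ is a run on $w$ (counters stay nonnegative) and is accepting. $\mathrm{RN}_k$ (resp. $\mathrm{RH}_k$) is the class of languages recognised by arbitrary (resp. history-deterministic) $k$-VASS under reachability acceptance, and $\mathrm{RH}=\bigcup_{k\ge1}\mathrm{RH}_k$. *)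

theory Defs
  imports Main
begin

datatype ab = a | b

text \<open>A k-VASS over alphabet 'l with natural-number states.
  A transition (p, x, d, q) goes from p to q reading letter x with update vector d in Z^k
  (represented as an int list of length k).\<close>
record 'l vass =
  states :: "nat set"
  init   :: nat
  final  :: "nat set"
  trans  :: "(nat \<times> 'l \<times> int list \<times> nat) set"
  dim    :: nat

type_synonym 'l transition = "nat \<times> 'l \<times> int list \<times> nat"

definition src :: "'l transition \<Rightarrow> nat" where "src t = fst t"
definition lbl :: "'l transition \<Rightarrow> 'l" where "lbl t = fst (snd t)"
definition upd :: "'l transition \<Rightarrow> int list" where "upd t = fst (snd (snd t))"
definition tgt :: "'l transition \<Rightarrow> nat" where "tgt t = snd (snd (snd t))"

definition wf_vass :: "'l vass \<Rightarrow> bool" where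
  "wf_vass V \<longleftrightarrow> finite (states V) \<and> init V \<in> states V \<and> final V \<subseteq> states V
     \<and> finite (trans V)
     \<and> (\<forall>t\<in>trans V. src t \<in> states V \<and> tgt t \<in> states V \<and> length (upd t) = dim V)"

definition counter :: "'l transition list \<Rightarrow> nat \<Rightarrow> nat \<Rightarrow> int" where
  "counter ts j i = (\<Sum>l<j. upd (ts ! l) ! i)"

definition last_state :: "'l vass \<Rightarrow> 'l transition list \<Rightarrow> nat" where
  "last_state V ts = (if ts = [] then init V else tgt (last ts))"

definition is_run :: "'l vass \<Rightarrow> 'l list \<Rightarrow> 'l transition list \<Rightarrow> bool" where
  "is_run V w ts \<longleftrightarrow> length ts = length w
     \<and> (\<forall>j<length ts. ts ! j \<in> trans V \<and> lbl (ts ! j) = w ! j)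
     \<and> (ts \<noteq> [] \<longrightarrow> src (ts ! 0) = init V)
     \<and> (\<forall>j. Suc j < length ts \<longrightarrow> tgt (ts ! j) = src (ts ! Suc j))
     \<and> (\<forall>j\<le>length ts. \<forall>i<dim V. 0 \<le> counter ts j i)"

definition is_acc_run :: "'l vass \<Rightarrow> 'l list \<Rightarrow> 'l transition list \<Rightarrow> bool" where
  "is_acc_run V w ts \<longleftrightarrow> is_run V w ts \<and> last_state V ts \<in> final V
     \<and> (\<forall>i<dim V. counter ts (length ts) i = 0)"

definition lang :: "'l vass \<Rightarrow> 'l list set" where
  "lang V = {w. \<exists>ts. is_acc_run V w ts}"

definition res_run :: "('l transition list \<Rightarrow> 'l \<Rightarrow> 'l transition) \<Rightarrow> 'l list \<Rightarrow> 'l transition list" where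
  "res_run r w = foldl (\<lambda>ts x. ts @ [r ts x]) [] w"

definition is_resolver :: "'l vass \<Rightarrow> ('l transition list \<Rightarrow> 'l \<Rightarrow> 'l transition) \<Rightarrow> bool" where
  "is_resolver V r \<longleftrightarrow> (\<forall>ts x. r ts x \<in> trans V \<and> lbl (r ts x) = x)
     \<and> (\<forall>w\<in>lang V. is_acc_run V w (res_run r w))"

definition history_deterministic :: "'l vass \<Rightarrow> bool" where
  "history_deterministic V \<longleftrightarrow> (\<exists>r. is_resolver V r)"

definition RN :: "nat \<Rightarrow> 'l list set set" where
  "RN k = {lang V | V. wf_vass V \<and> dim V = k}"

definition RH :: "nat \<Rightarrow> 'l list set set" where
  "RH k = {lang V | V. wf_vass V \<and> dim V = k \<and> history_deterministic V}"

definition L_ab :: "ab list set" where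
  "L_ab = {replicate n a @ replicate m b | n m. m \<le> n}"

end

theory Submission
  imports Defs
begin

lemma counter_snoc_le: "j \<le> length ts \<Longrightarrow> counter (ts@[t]) j i = counter ts j i"
  unfolding counter_def by (rule sum.cong) (auto simp: nth_append)

lemma counter_snoc_end: "counter (ts@[t]) (Suc (length ts)) i = counter ts (length ts) i + upd t ! i"
proof -
  have "counter (ts@[t]) (Suc (length ts)) i = counter (ts@[t]) (length ts) i + upd t ! i"
    unfolding counter_def by (simp add: nth_append)
  then show ?thesis using counter_snoc_le[of "length ts" ts t i] by simp
qed

lemma is_run_Nil: "is_run V [] []" by (simp add: is_run_def counter_def)

lemma is_run_length: "is_run V w ts \<Longrightarrow> length ts = length w"
  by (simp add: is_run_def)

lemma last_state_snoc[simp]: "last_state V (ts@[t]) = tgt t"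
  by (simp add: last_state_def)

lemma is_run_snoc:
  "is_run V (w@[x]) (ts@[t]) \<longleftrightarrow> is_run V w ts \<and> t \<in> trans V \<and> lbl t = x
     \<and> src t = last_state V ts \<and> (\<forall>i<dim V. 0 \<le> counter ts (length ts) i + upd t ! i)"
proof
  assume L: "is_run V (w@[x]) (ts@[t])"
  then have len: "length ts = length w" by (simp add: is_run_def)
  have "is_run V w ts"
    unfolding is_run_def
  proof (intro conjI allI impI)
    show "length ts = length w" by fact
  next
    fix j assume j: "j < length ts"
    then show "ts ! j \<in> trans V" using L unfolding is_run_def
      by (metis (no_types, lifting) length_append_singleton less_SucI nth_append_left)
    show "lbl (ts ! j) = w ! j" using L j len unfolding is_run_def
      by (metis (no_types, lifting) length_append_singleton less_SucI nth_append_left)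
  next
    assume "ts \<noteq> []" then show "src (ts ! 0) = init V" using L unfolding is_run_def
      by (simp add: nth_append)
  next
    fix j assume "Suc j < length ts" then show "tgt (ts ! j) = src (ts ! Suc j)"
      using L unfolding is_run_def by (simp add: nth_append)
  next
    fix j i assume "j \<le> length ts" "i < dim V" then show "0 \<le> counter ts j i"
    proof -
      have "0 \<le> counter (ts@[t]) j i" using L \<open>j \<le> length ts\<close> \<open>i < dim V\<close> unfolding is_run_def by simp
      then show ?thesis using counter_snoc_le[of j ts t i] \<open>j \<le> length ts\<close> by simp
    qed
  qed
  moreover have "t \<in> trans V \<and> lbl t = x" using L len unfolding is_run_def
    by (metis length_append_singleton lessI nth_append_length)
  moreover have "src t = last_state V ts"
  proof (cases "ts = []")
    case True then show ?thesis using L unfolding is_run_def last_state_def by simp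
  next
    case False
    then have "tgt ((ts@[t]) ! (length ts - 1)) = src ((ts@[t]) ! Suc (length ts - 1))"
    proof -
      have "\<forall>j. Suc j < length (ts@[t]) \<longrightarrow> tgt ((ts@[t]) ! j) = src ((ts@[t]) ! Suc j)"
        using L unfolding is_run_def by blast
      moreover have "Suc (length ts - 1) < length (ts@[t])" using False by simp
      ultimately show ?thesis by blast
    qed
    then show ?thesis using False by (simp add: nth_append last_conv_nth last_state_def)
  qed
  moreover have "\<forall>i<dim V. 0 \<le> counter ts (length ts) i + upd t ! i"
    using L counter_snoc_end[of ts t] unfolding is_run_def by (metis length_append_singleton order_refl)
  ultimately show "is_run V w ts \<and> t \<in> trans V \<and> lbl t = x
     \<and> src t = last_state V ts \<and> (\<forall>i<dim V. 0 \<le> counter ts (length ts) i + upd t ! i)"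
    by blast
next
  assume R: "is_run V w ts \<and> t \<in> trans V \<and> lbl t = x
     \<and> src t = last_state V ts \<and> (\<forall>i<dim V. 0 \<le> counter ts (length ts) i + upd t ! i)"
  then have len: "length ts = length w" by (simp add: is_run_def)
  show "is_run V (w@[x]) (ts@[t])"
    unfolding is_run_def
  proof (intro conjI allI impI)
    show "length (ts @ [t]) = length (w @ [x])" using len by simp
  next
    fix j assume j: "j < length (ts @ [t])"
    show "(ts @ [t]) ! j \<in> trans V"
      using R j unfolding is_run_def by (cases "j < length ts") (auto simp: nth_append)
    show "lbl ((ts @ [t]) ! j) = (w @ [x]) ! j"
      using R j len unfolding is_run_def by (cases "j < length ts") (auto simp: nth_append)
  next
    assume "ts @ [t] \<noteq> []" then show "src ((ts @ [t]) ! 0) = init V"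
      using R unfolding is_run_def last_state_def by (cases ts) auto
  next
    fix j assume j: "Suc j < length (ts @ [t])"
    show "tgt ((ts @ [t]) ! j) = src ((ts @ [t]) ! Suc j)"
    proof (cases "Suc j < length ts")
      case True then show ?thesis using R unfolding is_run_def by (simp add: nth_append)
    next
      case False
      then have jj: "Suc j = length ts" using j by simp
      then have "j = length ts - 1" by simp
      then show ?thesis using R jj unfolding last_state_def
        by (auto simp: nth_append last_conv_nth)
    qed
  next
    fix j i assume j: "j \<le> length (ts @ [t])" and i: "i < dim V"
    show "0 \<le> counter (ts @ [t]) j i"
    proof (cases "j \<le> length ts")
      case True then show ?thesis using R i counter_snoc_le[of j ts t i] unfolding is_run_def by simp
    next
      case False
      then have "j = Suc (length ts)" using j by simp
      then show ?thesis using R i counter_snoc_end[of ts t i] by simp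
    qed
  qed
qed


lemma foldl_prefix:
  "\<exists>S. foldl (\<lambda>ts x. ts @ [r ts x]) acc v = acc @ S \<and> length S = length v"
proof (induction v arbitrary: acc)
  case Nil then show ?case by simp
next
  case (Cons y v)
  obtain S where "foldl (\<lambda>ts x. ts @ [r ts x]) (acc @ [r acc y]) v = (acc @ [r acc y]) @ S \<and> length S = length v"
    using Cons by blast
  then show ?case by (intro exI[of _ "r acc y # S"]) simp
qed

lemma res_run_prefix: "\<exists>S. res_run r (u @ v) = res_run r u @ S \<and> length S = length v"
  unfolding res_run_def by (simp add: foldl_prefix)

lemma splice:
  assumes "is_run V (w2@v) (P2@S)" "length P2 = length w2" "is_run V w1 P1"
    "last_state V P1 = last_state V P2"
    "\<forall>i<dim V. counter P1 (length P1) i = counter P2 (length P2) i"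
  shows "is_run V (w1@v) (P1@S) \<and> last_state V (P1@S) = last_state V (P2@S)
     \<and> (\<forall>i<dim V. counter (P1@S) (length (P1@S)) i = counter (P2@S) (length (P2@S)) i)"
  using assms(1)
proof (induction S arbitrary: v rule: rev_induct)
  case Nil
  then have "v = []" using is_run_length[OF Nil] assms(2) by simp
  then show ?case using assms by simp
next
  case (snoc t S)
  have "length v = Suc (length S)" using is_run_length[OF snoc.prems] assms(2) by simp
  then obtain v' x where v: "v = v' @ [x]" by (metis length_Suc_conv_rev)
  have H: "is_run V (w2@v') (P2@S) \<and> t \<in> trans V \<and> lbl t = x
     \<and> src t = last_state V (P2@S) \<and> (\<forall>i<dim V. 0 \<le> counter (P2@S) (length (P2@S)) i + upd t ! i)"
    using snoc.prems v is_run_snoc[of V "w2@v'" x "P2@S" t] by simp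
  with snoc.IH have IH: "is_run V (w1@v') (P1@S) \<and> last_state V (P1@S) = last_state V (P2@S)
     \<and> (\<forall>i<dim V. counter (P1@S) (length (P1@S)) i = counter (P2@S) (length (P2@S)) i)"
    by blast
  have "is_run V ((w1@v') @ [x]) ((P1@S) @ [t])"
    using H IH by (subst is_run_snoc) simp
  moreover have "\<forall>i<dim V. counter ((P1@S)@[t]) (Suc (length (P1@S))) i
     = counter ((P2@S)@[t]) (Suc (length (P2@S))) i"
    using IH by (simp only: counter_snoc_end) simp
  moreover have "last_state V ((P1@S)@[t]) = last_state V ((P2@S)@[t])" by (simp only: last_state_snoc)
  ultimately show ?case using v by simp
qed

lemma filter_a: "filter (\<lambda>x. x = a) (replicate n a @ replicate m b) = replicate n a"
  by (induction n) (auto simp: filter_replicate)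
lemma filter_b: "filter (\<lambda>x. x = b) (replicate n a @ replicate m b) = replicate m b"
  by (induction n) (auto simp: filter_replicate)

lemma rep_in_L: "m \<le> n \<Longrightarrow> replicate n a @ replicate m b \<in> L_ab"
  unfolding L_ab_def by blast

lemma not_in_L: "n < m \<Longrightarrow> replicate n a @ replicate m b \<notin> L_ab"
proof
  assume "n < m" "replicate n a @ replicate m b \<in> L_ab"
  then obtain n' m' where e: "replicate n a @ replicate m b = replicate n' a @ replicate m' b" "m' \<le> n'"
    unfolding L_ab_def by blast
  have "n = n'" using arg_cong[OF e(1), of "\<lambda>w. length (filter (\<lambda>x. x = a) w)"]
    by (simp only: filter_a) simp
  moreover have "m = m'" using arg_cong[OF e(1), of "\<lambda>w. length (filter (\<lambda>x. x = b) w)"]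
    by (simp only: filter_b) simp
  ultimately show False using e(2) \<open>n < m\<close> by simp
qed

lemma not_RH: "L_ab \<notin> RH k"
proof
  assume "L_ab \<in> RH k"
  then obtain V where V: "wf_vass V" "history_deterministic V" "lang V = L_ab"
    unfolding RH_def by blast
  then obtain r where r: "is_resolver V r" unfolding history_deterministic_def by blast
  have acc: "\<And>w. w \<in> L_ab \<Longrightarrow> is_acc_run V w (res_run r w)"
    using r V(3) unfolding is_resolver_def by blast
  define f where "f n = last_state V (res_run r (replicate n a))" for n
  have accA: "is_acc_run V (replicate n a) (res_run r (replicate n a))" for n
    using acc[OF rep_in_L[of 0 n]] by simp
  have "f n \<in> states V" for n
    using accA[of n] V(1) unfolding f_def is_acc_run_def wf_vass_def by blast
  then have "f ` UNIV \<subseteq> states V" by blast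
  then have "finite (f ` UNIV)" using V(1) unfolding wf_vass_def by (meson finite_subset)
  then have "\<not> inj f" using finite_imageD by blast
  then obtain n1 n2 where n12: "n1 \<noteq> n2" "f n1 = f n2" unfolding inj_def by blast
  obtain m1 m2 where m: "m1 < m2" "f m1 = f m2"
  proof (cases "n1 < n2")
    case True then show ?thesis using that n12 by blast
  next
    case False then show ?thesis using that[of n2 n1] n12 by simp
  qed
  define w1 where "w1 = replicate m1 a"
  define w2 where "w2 = replicate m2 a"
  define v where "v = replicate m2 b"
  define P1 where "P1 = res_run r w1"
  define P2 where "P2 = res_run r w2"
  obtain S where S: "res_run r (w2 @ v) = P2 @ S" unfolding P2_def using res_run_prefix by blast
  have R: "is_acc_run V (w2 @ v) (P2 @ S)" using acc[OF rep_in_L[of m2 m2]] S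
    unfolding w2_def v_def by simp
  have A1: "is_acc_run V w1 P1" and A2: "is_acc_run V w2 P2"
    using accA unfolding P1_def P2_def w1_def w2_def by auto
  have sp: "is_run V (w1@v) (P1@S) \<and> last_state V (P1@S) = last_state V (P2@S)
     \<and> (\<forall>i<dim V. counter (P1@S) (length (P1@S)) i = counter (P2@S) (length (P2@S)) i)"
  proof (rule splice)
    show "is_run V (w2 @ v) (P2 @ S)" using R unfolding is_acc_run_def by blast
    show "length P2 = length w2" using A2 unfolding is_acc_run_def is_run_def by blast
    show "is_run V w1 P1" using A1 unfolding is_acc_run_def by blast
    show "last_state V P1 = last_state V P2" using m(2) unfolding f_def P1_def P2_def w1_def w2_def .
    show "\<forall>i<dim V. counter P1 (length P1) i = counter P2 (length P2) i"
      using A1 A2 unfolding is_acc_run_def by simp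
  qed
  then have "is_acc_run V (w1@v) (P1@S)" using R unfolding is_acc_run_def by simp
  then have "w1 @ v \<in> L_ab" using V(3) unfolding lang_def by blast
  then show False using not_in_L[OF m(1)] unfolding w1_def v_def by simp
qed


definition V1 :: "ab vass" where
  "V1 = (| states = {0,1}, init = 0, final = {0,1},
     trans = {(0,a,[1],0), (0,a,[0],0), (0,b,[-1],1), (1,b,[-1],1)}, dim = 1 |)"

lemma wf_V1: "wf_vass V1"
  unfolding wf_vass_def V1_def by (auto simp: src_def tgt_def upd_def)

lemma inv_V1:
  "is_run V1 w ts \<Longrightarrow>
    (last_state V1 ts = 0 \<and> (\<exists>n. w = replicate n a \<and> counter ts (length ts) 0 \<le> int n))
  \<or> (last_state V1 ts = 1 \<and> (\<exists>n m. w = replicate n a @ replicate m b \<and> counter ts (length ts) 0 + int m \<le> int n))"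
proof (induction w arbitrary: ts rule: rev_induct)
  case Nil
  then have "ts = []" using is_run_length by fastforce
  then show ?case by (auto simp: last_state_def V1_def counter_def)
next
  case (snoc x w)
  have "length ts = Suc (length w)" using is_run_length[OF snoc.prems] by simp
  then obtain ts' t where ts: "ts = ts' @ [t]" by (metis length_Suc_conv_rev)
  have H: "is_run V1 w ts' \<and> t \<in> trans V1 \<and> lbl t = x \<and> src t = last_state V1 ts'
      \<and> (\<forall>i<dim V1. 0 \<le> counter ts' (length ts') i + upd t ! i)"
    using snoc.prems ts is_run_snoc[of V1 w x ts' t] by simp
  have c: "counter ts (length ts) 0 = counter ts' (length ts') 0 + upd t ! 0"
    using ts counter_snoc_end by simp
  from snoc.IH[of ts'] H have IH: "(last_state V1 ts' = 0 \<and> (\<exists>n. w = replicate n a \<and> counter ts' (length ts') 0 \<le> int n))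
  \<or> (last_state V1 ts' = 1 \<and> (\<exists>n m. w = replicate n a @ replicate m b \<and> counter ts' (length ts') 0 + int m \<le> int n))"
    by simp
  have T: "t \<in> {(0,a,[1],0), (0,a,[0],0), (0,b,[-1],1), (1,b,[-1],1)}" using H by (simp add: V1_def)
  define C where "C = counter ts' (length ts') 0"
  have ls: "last_state V1 ts = tgt t" using ts by simp
  show ?case
  proof (cases "t = (0,a,[1],0)")
    case True
    then obtain n where w: "w = replicate n a" "C \<le> int n" using IH H unfolding C_def by (auto simp: src_def)
    have x: "x = a" using True H by (simp add: lbl_def)
    have cc: "counter ts (length ts) 0 = C + 1" using c True by (simp add: upd_def C_def)
    have "w @ [x] = replicate (Suc n) a" using w x by (simp add: replicate_append_same)
    moreover have "last_state V1 ts = 0" using ls True by (simp add: tgt_def)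
    moreover have "counter ts (length ts) 0 \<le> int (Suc n)" using cc w by simp
    ultimately show ?thesis by blast
  next
    case F1: False
    show ?thesis
    proof (cases "t = (0,a,[0],0)")
      case True
      then obtain n where w: "w = replicate n a" "C \<le> int n" using IH H unfolding C_def by (auto simp: src_def)
      have x: "x = a" using True H by (simp add: lbl_def)
      have cc: "counter ts (length ts) 0 = C" using c True by (simp add: upd_def C_def)
      have "w @ [x] = replicate (Suc n) a" using w x by (simp add: replicate_append_same)
      moreover have "last_state V1 ts = 0" using ls True by (simp add: tgt_def)
      moreover have "counter ts (length ts) 0 \<le> int (Suc n)" using cc w by simp
      ultimately show ?thesis by blast
    next
      case F2: False
      show ?thesis
      proof (cases "t = (0,b,[-1],1)")
        case True
        then obtain n where w: "w = replicate n a" "C \<le> int n" using IH H unfolding C_def by (auto simp: src_def)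
        have x: "x = b" using True H by (simp add: lbl_def)
        have cc: "counter ts (length ts) 0 = C - 1" using c True by (simp add: upd_def C_def)
        have "w @ [x] = replicate n a @ replicate 1 b" using w x by simp
        moreover have "last_state V1 ts = 1" using ls True by (simp add: tgt_def)
        moreover have "counter ts (length ts) 0 + int 1 \<le> int n" using cc w by simp
        ultimately show ?thesis by blast
      next
        case False
        then have t: "t = (1,b,[-1],1)" using T F1 F2 by blast
        then obtain n m where w: "w = replicate n a @ replicate m b" "C + int m \<le> int n"
          using IH H unfolding C_def by (auto simp: src_def)
        have x: "x = b" using t H by (simp add: lbl_def)
        have cc: "counter ts (length ts) 0 = C - 1" using c t by (simp add: upd_def C_def)
        have "w @ [x] = replicate n a @ replicate (Suc m) b" using w x by (simp add: replicate_append_same)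
        moreover have "last_state V1 ts = 1" using ls t by (simp add: tgt_def)
        moreover have "counter ts (length ts) 0 + int (Suc m) \<le> int n" using cc w by simp
        ultimately show ?thesis by blast
      qed
    qed
  qed
qed


lemma loop:
  assumes "t \<in> trans V" "src t = q" "tgt t = q" "is_run V w ts" "last_state V ts = q"
    "\<forall>j\<le>k. \<forall>i<dim V. 0 \<le> counter ts (length ts) i + int j * upd t ! i"
  shows "is_run V (w @ replicate k (lbl t)) (ts @ replicate k t) \<and> last_state V (ts @ replicate k t) = q
    \<and> (\<forall>i<dim V. counter (ts @ replicate k t) (length ts + k) i = counter ts (length ts) i + int k * upd t ! i)"
  using assms(6)
proof (induction k)
  case 0 then show ?case using assms by simp
next
  case (Suc k)
  then have IH: "is_run V (w @ replicate k (lbl t)) (ts @ replicate k t) \<and> last_state V (ts @ replicate k t) = q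
    \<and> (\<forall>i<dim V. counter (ts @ replicate k t) (length ts + k) i = counter ts (length ts) i + int k * upd t ! i)"
    by simp
  have e1: "ts @ replicate (Suc k) t = (ts @ replicate k t) @ [t]" by (simp add: replicate_append_same)
  have e2: "w @ replicate (Suc k) (lbl t) = (w @ replicate k (lbl t)) @ [lbl t]" by (simp add: replicate_append_same)
  have len: "length (ts @ replicate k t) = length ts + k" by simp
  have cs: "\<forall>i<dim V. counter ((ts @ replicate k t) @ [t]) (Suc (length (ts @ replicate k t))) i
      = counter ts (length ts) i + int (Suc k) * upd t ! i"
    using IH len counter_snoc_end[of "ts @ replicate k t" t] by (simp add: algebra_simps)
  have "is_run V ((w @ replicate k (lbl t)) @ [lbl t]) ((ts @ replicate k t) @ [t])"
  proof (subst is_run_snoc, intro conjI)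
    show "\<forall>i<dim V. 0 \<le> counter (ts @ replicate k t) (length (ts @ replicate k t)) i + upd t ! i"
    proof (intro allI impI)
      fix i assume i: "i < dim V"
      have "0 \<le> counter ts (length ts) i + int (Suc k) * upd t ! i" using Suc.prems i by blast
      then show "0 \<le> counter (ts @ replicate k t) (length (ts @ replicate k t)) i + upd t ! i"
        using IH i len by (simp add: algebra_simps)
    qed
  qed (use IH assms in auto)
  moreover have "last_state V ((ts @ replicate k t) @ [t]) = q" using assms(3) by (simp only: last_state_snoc)
  ultimately show ?case using cs len by (simp only: e1 e2) simp
qed

lemma V1_simps: "trans V1 = {(0,a,[1],0), (0,a,[0],0), (0,b,[-1],1), (1,b,[-1],1)}"
  "dim V1 = 1" "init V1 = 0" "final V1 = {0,1}"
  by (simp_all add: V1_def)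

lemma lang_V1: "lang V1 = L_ab"
proof
  show "lang V1 \<subseteq> L_ab"
  proof
    fix w assume "w \<in> lang V1"
    then obtain ts where acc: "is_acc_run V1 w ts" unfolding lang_def by blast
    then have c0: "counter ts (length ts) 0 = 0" unfolding is_acc_run_def by (simp add: V1_simps)
    from acc have "is_run V1 w ts" unfolding is_acc_run_def by blast
    from inv_V1[OF this] show "w \<in> L_ab"
    proof
      assume "last_state V1 ts = 0 \<and> (\<exists>n. w = replicate n a \<and> counter ts (length ts) 0 \<le> int n)"
      then obtain n where "w = replicate n a" by blast
      then show ?thesis using rep_in_L[of 0 n] by simp
    next
      assume "last_state V1 ts = 1 \<and> (\<exists>n m. w = replicate n a @ replicate m b \<and> counter ts (length ts) 0 + int m \<le> int n)"
      then obtain n m where "w = replicate n a @ replicate m b" "int m \<le> int n" using c0 by auto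
      then show ?thesis using rep_in_L[of m n] by simp
    qed
  qed
next
  show "L_ab \<subseteq> lang V1"
  proof
    fix w assume "w \<in> L_ab"
    then obtain n m where w: "w = replicate n a @ replicate m b" "m \<le> n" unfolding L_ab_def by blast
    define A1 where "A1 = (0::nat, a, [1::int], 0::nat)"
    define A0 where "A0 = (0::nat, a, [0::int], 0::nat)"
    define B0 where "B0 = (0::nat, b, [-1::int], 1::nat)"
    define B1 where "B1 = (1::nat, b, [-1::int], 1::nat)"
    have T: "A1 \<in> trans V1" "A0 \<in> trans V1" "B0 \<in> trans V1" "B1 \<in> trans V1"
      unfolding A1_def A0_def B0_def B1_def V1_simps by auto
    have r0: "is_run V1 [] []" "last_state V1 [] = 0" "counter [] 0 0 = 0"
      by (simp_all add: is_run_Nil last_state_def V1_simps counter_def)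
    have s1: "is_run V1 ([] @ replicate m a) ([] @ replicate m A1) \<and> last_state V1 ([] @ replicate m A1) = 0
      \<and> (\<forall>i<dim V1. counter ([] @ replicate m A1) (length [] + m) i = counter [] (length []) i + int m * upd A1 ! i)"
      using loop[of A1 V1 0 "[]" "[]" m] T r0
      by (simp add: A1_def src_def tgt_def lbl_def upd_def V1_simps counter_def)
    define ts1 where "ts1 = replicate m A1"
    have s1': "is_run V1 (replicate m a) ts1" "last_state V1 ts1 = 0" "counter ts1 (length ts1) 0 = int m"
      using s1 unfolding ts1_def by (simp_all add: V1_simps A1_def upd_def counter_def)
    have s2: "is_run V1 (replicate m a @ replicate (n-m) a) (ts1 @ replicate (n-m) A0) \<and> last_state V1 (ts1 @ replicate (n-m) A0) = 0
      \<and> (\<forall>i<dim V1. counter (ts1 @ replicate (n-m) A0) (length ts1 + (n-m)) i = counter ts1 (length ts1) i + int (n-m) * upd A0 ! i)"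
      using loop[of A0 V1 0 "replicate m a" ts1 "n-m"] T s1'
      by (simp add: A0_def src_def tgt_def lbl_def upd_def V1_simps)
    define ts2 where "ts2 = ts1 @ replicate (n-m) A0"
    have wa: "replicate m a @ replicate (n-m) a = replicate n a" using w(2)
      by (metis le_add_diff_inverse replicate_add)
    have s2': "is_run V1 (replicate n a) ts2" "last_state V1 ts2 = 0" "counter ts2 (length ts2) 0 = int m"
      using s2 s1' wa unfolding ts2_def by (simp_all add: V1_simps A0_def upd_def)
    show "w \<in> lang V1"
    proof (cases m)
      case 0
      then have "is_acc_run V1 w ts2" using s2' w unfolding is_acc_run_def by (simp add: V1_simps)
      then show ?thesis unfolding lang_def by blast
    next
      case (Suc m')
      have s3: "is_run V1 (replicate n a @ [b]) (ts2 @ [B0])"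
        using s2' T Suc by (subst is_run_snoc) (simp add: B0_def lbl_def src_def upd_def V1_simps)
      have c3: "counter (ts2 @ [B0]) (length (ts2 @ [B0])) 0 = int m'"
        using counter_snoc_end[of ts2 B0 0] s2' Suc by (simp add: B0_def upd_def)
      have l3: "last_state V1 (ts2 @ [B0]) = 1" by (simp add: B0_def tgt_def)
      have s4: "is_run V1 ((replicate n a @ [b]) @ replicate m' b) ((ts2 @ [B0]) @ replicate m' B1) \<and> last_state V1 ((ts2 @ [B0]) @ replicate m' B1) = 1
        \<and> (\<forall>i<dim V1. counter ((ts2 @ [B0]) @ replicate m' B1) (length (ts2 @ [B0]) + m') i = counter (ts2 @ [B0]) (length (ts2 @ [B0])) i + int m' * upd B1 ! i)"
        using loop[of B1 V1 1 "replicate n a @ [b]" "ts2 @ [B0]" m'] T s3 c3 l3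
        by (simp add: B1_def src_def tgt_def lbl_def upd_def V1_simps)
      have we: "(replicate n a @ [b]) @ replicate m' b = w" using w Suc by simp
      have "is_acc_run V1 w ((ts2 @ [B0]) @ replicate m' B1)"
        using s4 c3 we unfolding is_acc_run_def by (simp add: V1_simps B1_def upd_def)
      then show ?thesis unfolding lang_def by blast
    qed
  qed
qed

theorem mainTheorem5:
  shows "L_ab \<in> RN 1 \<and> L_ab \<notin> (\<Union>k\<in>{k. k \<ge> 1}. RH k)"
proof
  show "L_ab \<in> RN 1" unfolding RN_def using wf_V1 lang_V1 V1_simps(2) by blast
  show "L_ab \<notin> (\<Union>k\<in>{k. k \<ge> 1}. RH k)" using not_RH by blast
qed

end
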